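(* Let $D\geq 2$ be a square-free integer, $K=\mathbb{Q}(\sqrt{D})$ with ring of integers $\mathbb{Z}_K$, and let $p\geq 5$ be a prime not dividing $D$. Let $u_K>1$ be the fundamental unit of $K$ (with respect to the real embedding sending $\sqrt{D}$ to a positive number), and let $u_D$ be the first totally positive power of $u_K$ (so $u_D=u_K^2$ if $u_K$ has norm $-1$, and $u_D=u_K$ otherwise). For $\ell\geq 1$ put $d_\ell(D)=u_D^\ell+u_D^{-\ell}+1$ (a positive integer). Suppose there exists $\ell\geq 1$ with $p\mid d_\ell(D)$, and let $\ell$ be the least such index. If $p^2\mid d_\ell(D)$, then the order of $u_K$ in $(\mathbb{Z}_K/p\mathbb{Z}_K)^\times$ equals the order of $u_K$ in $(\mathbb{Z}_K/p^2\mathbb{Z}_K)^\times$. *)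

theory Defs
  imports "HOL-Computational_Algebra.Computational_Algebra"
begin

text \<open>K = Q(sqrt D), viewed inside the reals via the embedding sending sqrt D to the
  positive square root.\<close>
definition QK :: "int \<Rightarrow> real set" where
  "QK D = {x. \<exists>a b :: rat. x = of_rat a + of_rat b * sqrt (real_of_int D)}"

definition OK :: "int \<Rightarrow> real set" where
  "OK D = {x \<in> QK D. algebraic_int x}"

definition conjK :: "int \<Rightarrow> real \<Rightarrow> real" where
  "conjK D x = (THE y. \<exists>a b :: rat. x = of_rat a + of_rat b * sqrt (real_of_int D)
                         \<and> y = of_rat a - of_rat b * sqrt (real_of_int D))"

definition normK :: "int \<Rightarrow> real \<Rightarrow> real" where
  "normK D x = x * conjK D x"

definition unitsOK :: "int \<Rightarrow> real set" where
  "unitsOK D = {x \<in> OK D. x \<noteq> 0 \<and> inverse x \<in> OK D}"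

definition fund_unit :: "int \<Rightarrow> real" where
  "fund_unit D = (THE u. u \<in> unitsOK D \<and> u > 1 \<and> (\<forall>v \<in> unitsOK D. v > 1 \<longrightarrow> u \<le> v))"

definition uD :: "int \<Rightarrow> real" where
  "uD D = (if normK D (fund_unit D) = -1 then fund_unit D ^ 2 else fund_unit D)"

definition dl :: "int \<Rightarrow> nat \<Rightarrow> real" where
  "dl D l = uD D ^ l + inverse (uD D) ^ l + 1"

definition congOK :: "int \<Rightarrow> int \<Rightarrow> real \<Rightarrow> real \<Rightarrow> bool" where
  "congOK D m x y \<longleftrightarrow> (x - y) / real_of_int m \<in> OK D"

definition ord_mod :: "int \<Rightarrow> int \<Rightarrow> real \<Rightarrow> nat" where
  "ord_mod D m u = (LEAST n::nat. n > 0 \<and> congOK D m (u ^ n) 1)"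

end

theory Submission
  imports Defs "HOL-Analysis.Kronecker_Approximation_Theorem"
begin

locale qf =
  fixes D :: int
  assumes D2: "D \<ge> 2" and sqf: "squarefree D"
begin

abbreviation s where "s \<equiv> sqrt (real_of_int D)"

lemma s_pos: "s > 0" using D2 by simp
lemma absD [simp]: "\<bar>real_of_int D\<bar> = real_of_int D" using D2 by simp
lemma s_sq: "s * s = of_int D" using D2 by simp

lemma s_irr: "s \<notin> \<rat>"
proof
  assume "s \<in> \<rat>"
  then obtain a b where ab: "b > 0" "coprime a b" "s = of_int a / of_int b" by (auto elim: Rats_cases')
  then have "s * of_int b = of_int a" by simp
  then have "(s * of_int b) * (s * of_int b) = (of_int a)*(of_int a :: real)" by simp
  then have "of_int D * (of_int b * of_int b) = (of_int a * of_int a :: real)" using s_sq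
    by (simp add: algebra_simps)
  hence eq: "D * (b*b) = a*a" by (metis of_int_eq_iff of_int_mult)
  hence "b^2 dvd a^2" by (metis dvd_triv_right power2_eq_square)
  moreover have "coprime (b^2) (a^2)" using ab by (simp add: coprime_commute)
  ultimately have "is_unit (b^2)" by (meson coprime_common_divisor dvd_refl)
  hence "b^2 = 1" by simp
  with ab have "b = 1" using power2_eq_1_iff[of b] by auto
  hence "a^2 dvd D" using eq by (simp add: power2_eq_square)
  hence "is_unit a" using sqf by (simp add: squarefree_def)
  hence "\<bar>a\<bar> = 1" by simp
  hence "a * a = 1" by (metis abs_mult_self_eq mult_1)
  with eq \<open>b = 1\<close> D2 show False by simp
qed

lemma rep_unique:
  assumes "a \<in> \<rat>" "b \<in> \<rat>" "c \<in> \<rat>" "d \<in> \<rat>" "a + b* s = c + d* s"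
  shows "a = c \<and> b = d"
proof (cases "b = d")
  case True then show ?thesis using assms by simp
next
  case False
  have "(d - b) * s = a - c" using assms(5) by (simp add: algebra_simps)
  hence "s = (a - c)/(d - b)" using False by (simp add: field_simps)
  hence "s \<in> \<rat>" using assms by simp
  with s_irr show ?thesis by blast
qed

lemma conjK_eq:
  assumes "a \<in> \<rat>" "b \<in> \<rat>"
  shows "conjK D (a + b* s) = a - b* s"
proof -
  obtain a' b' where a': "a = of_rat a'" and b': "b = of_rat b'" using assms by (auto elim!: Rats_cases)
  show ?thesis unfolding conjK_def
  proof (rule the_equality)
    show "\<exists>a'' b''. a + b * s = of_rat a'' + of_rat b'' * s \<and> a - b * s = of_rat a'' - of_rat b'' * s"
      using a' b' by blast
  next
    fix y assume "\<exists>a'' b''. a + b * s = of_rat a'' + of_rat b'' * s \<and> y = of_rat a'' - of_rat b'' * s"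
    then obtain a'' b'' where h: "a + b * s = of_rat a'' + of_rat b'' * s" "y = of_rat a'' - of_rat b'' * s" by blast
    from rep_unique[OF assms _ _ h(1)] have "a = of_rat a''" "b = of_rat b''" by auto
    with h(2) show "y = a - b* s" by simp
  qed
qed

lemma QK_iff: "x \<in> QK D \<longleftrightarrow> (\<exists>a b. a \<in> \<rat> \<and> b \<in> \<rat> \<and> x = a + b* s)"
  unfolding QK_def by (auto simp: Rats_def)

definition elt :: "int \<Rightarrow> int \<Rightarrow> real" where
  "elt A B = (of_int A + of_int B * s) / 2"

lemma elt_form: "elt A B = of_int A / 2 + (of_int B / 2) * s"
  by (simp add: elt_def add_divide_distrib)

lemma elt_unique: "elt A B = elt A' B' \<Longrightarrow> A = A' \<and> B = B'"
  using rep_unique[of "of_int A / 2" "of_int B / 2" "of_int A' / 2" "of_int B' / 2"]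
  by (simp add: elt_form)

lemma conj_elt: "conjK D (elt A B) = elt A (-B)"
  using conjK_eq[of "of_int A / 2" "of_int B / 2"] by (simp add: elt_form)

lemma elt_add: "elt A B + elt A' B' = elt (A+A') (B+B')"
  by (simp add: elt_def add_divide_distrib[symmetric] algebra_simps)

lemma elt_mult2: "2 * (elt A B * elt A' B') = elt (A*A' + D*B*B') (A*B' + A'*B)"
proof -
  have "2 * (elt A B * elt A' B') = (of_int A + of_int B * s) * (of_int A' + of_int B' * s) / 2"
    by (simp add: elt_def)
  also have "(of_int A + of_int B * s) * (of_int A' + of_int B' * s)
     = of_int A * of_int A' + of_int B * of_int B' * (s * s) + (of_int A * of_int B' + of_int A' * of_int B) * s"
    by (simp add: algebra_simps)
  also have "\<dots> = of_int (A*A' + D*B*B') + of_int (A*B' + A'*B) * s" by (simp add: s_sq)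
  finally show ?thesis by (simp add: elt_def)
qed

lemma elt_norm: "elt A B * conjK D (elt A B) = of_int (A^2 - D*B^2) / 4"
proof -
  have "elt A B * elt A (-B) = (of_int A * of_int A - of_int B * of_int B * (s* s)) / 4"
    by (simp add: elt_def algebra_simps)
  thus ?thesis by (simp add: conj_elt s_sq power2_eq_square)
qed

definition inR :: "real \<Rightarrow> bool" where
  "inR x \<longleftrightarrow> (\<exists>A B. x = elt A B \<and> 4 dvd A^2 - D*B^2)"

lemma par: "even (A^2 - D*B^2) \<Longrightarrow> even (A - D*B)"
  by (auto simp: power2_eq_square)

lemma inR_add: assumes "inR x" "inR y" shows "inR (x + y)"
proof -
  obtain A B where x: "x = elt A B" "4 dvd A^2 - D*B^2" using assms(1) inR_def by auto
  obtain A' B' where y: "y = elt A' B'" "4 dvd A'^2 - D*B'^2" using assms(2) inR_def by auto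
  have e1: "even (A - D*B)" using par x(2) by (metis dvd_trans even_numeral)
  have e2: "even (A' - D*B')" using par y(2) by (metis dvd_trans even_numeral)
  have "even (A*A' - D*B*B')" using e1 e2 by auto
  then obtain k where "A*A' - D*B*B' = 2*k" by blast
  hence "4 dvd 2 * (A*A' - D*B*B')" by auto
  moreover have "(A+A')^2 - D*(B+B')^2 = (A^2 - D*B^2) + (A'^2 - D*B'^2) + 2 * (A*A' - D*B*B')"
    by (simp add: power2_eq_square algebra_simps)
  ultimately have "4 dvd (A+A')^2 - D*(B+B')^2" using x y by simp
  thus ?thesis unfolding inR_def using x y elt_add by blast
qed

lemma inR_mult: assumes "inR x" "inR y" shows "inR (x * y)"
proof -
  obtain A B where x: "x = elt A B" "4 dvd A^2 - D*B^2" using assms(1) inR_def by auto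
  obtain A' B' where y: "y = elt A' B'" "4 dvd A'^2 - D*B'^2" using assms(2) inR_def by auto
  have e1: "even (A - D*B)" using par x(2) by (metis dvd_trans even_numeral)
  have e2: "even (A' - D*B')" using par y(2) by (metis dvd_trans even_numeral)
  have "even (A*A' + D*B*B')" using e1 e2 by auto
  then obtain X where X: "A*A' + D*B*B' = 2*X" by blast
  have "even (A*B' + A'*B)" using e1 e2 by auto
  then obtain Y where Y: "A*B' + A'*B = 2*Y" by blast
  have "2 * (x*y) = elt (2*X) (2*Y)" using elt_mult2 x y X Y by simp
  also have "\<dots> = 2 * elt X Y" by (simp add: elt_def)
  finally have xy: "x*y = elt X Y" by simp
  have E: "(2*X)^2 - D*(2*Y)^2 = (A*A' + D*B*B')^2 - D*(A*B' + A'*B)^2"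
    by (simp add: X Y)
  also have "\<dots> = (A^2 - D*B^2) * (A'^2 - D*B'^2)"
    by (simp add: power2_eq_square algebra_simps)
  moreover have "16 dvd (A^2 - D*B^2) * (A'^2 - D*B'^2)"
    using mult_dvd_mono[OF x(2) y(2)] by simp
  ultimately have F: "16 dvd (2*X)^2 - D*(2*Y)^2" by simp
  have G: "(2*X)^2 - D*(2*Y)^2 = 4 * (X^2 - D*Y^2)" by (simp add: power2_eq_square algebra_simps)
  from F have "4 * 4 dvd 4 * (X^2 - D*Y^2)" unfolding G by simp
  hence "4 dvd X^2 - D*Y^2" by (metis dvd_times_left_cancel_iff zero_neq_numeral)
  thus ?thesis unfolding inR_def using xy by blast
qed

end

context qf begin

lemma inR_elt: "4 dvd A^2 - D*B^2 \<Longrightarrow> inR (elt A B)"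
  unfolding inR_def by blast

lemma inR_of_int [simp]: "inR (of_int n)"
proof -
  have "of_int n = elt (2*n) 0" by (simp add: elt_def)
  moreover have "4 dvd (2*n)^2 - D*0^2" by (simp add: power2_eq_square)
  ultimately show ?thesis unfolding inR_def by blast
qed

lemma inR_0 [simp]: "inR 0" using inR_of_int[of 0] by simp
lemma inR_1 [simp]: "inR 1" using inR_of_int[of 1] by simp

lemma inR_uminus: assumes "inR x" shows "inR (- x)"
proof -
  obtain A B where x: "x = elt A B" "4 dvd A^2 - D*B^2" using assms inR_def by auto
  have "- x = elt (-A) (-B)" using x by (simp add: elt_def)
  moreover have "4 dvd (-A)^2 - D*(-B)^2" using x by simp
  ultimately show ?thesis unfolding inR_def by blast
qed

lemma inR_diff: "inR x \<Longrightarrow> inR y \<Longrightarrow> inR (x - y)"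
  using inR_add[of x "-y"] inR_uminus[of y] by simp

lemma inR_power: "inR x \<Longrightarrow> inR (x ^ n)"
  by (induction n) (auto intro: inR_mult)

lemma inR_sum: "(\<And>i. i \<in> I \<Longrightarrow> inR (f i)) \<Longrightarrow> inR (sum f I)"
  by (induction I rule: infinite_finite_induct) (auto intro: inR_add)

lemma inR_QK: assumes "inR x" shows "x \<in> QK D"
proof -
  obtain A B where x: "x = elt A B" using assms inR_def by auto
  show ?thesis unfolding QK_iff
    by (rule exI[of _ "of_int A / 2"], rule exI[of _ "of_int B / 2"]) (simp add: x elt_form)
qed

lemma inR_algint: assumes "inR x" shows "algebraic_int x"
proof -
  obtain A B where x: "x = elt A B" "4 dvd A^2 - D*B^2" using assms inR_def by auto
  then obtain N where N: "A^2 - D*B^2 = 4*N" by blast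
  hence Nr: "4 * real_of_int N = of_int A ^ 2 - of_int D * of_int B ^ 2"
    by (metis (mono_tags, opaque_lifting) of_int_diff of_int_mult of_int_numeral of_int_power)
  define p where "p = [:of_int N, - of_int A, 1 :: real:]"
  have lc: "lead_coeff p = 1" by (simp add: p_def)
  have co: "\<forall>i. coeff p i \<in> \<int>" by (simp add: p_def coeff_pCons split: nat.split)
  have x2: "2 * x = of_int A + of_int B * s" using x by (simp add: elt_def)
  have xx: "4 * x * x = of_int A ^ 2 + 2 * of_int A * of_int B * s + of_int B ^ 2 * of_int D"
    using x2 s_sq by algebra
  have ax: "4 * (of_int A * x) = 2 * of_int A ^ 2 + 2 * of_int A * of_int B * s"
    using x2 by algebra
  have "4 * poly p x = 4 * of_int N - 4 * (of_int A * x) + 4 * x * x"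
    by (simp add: p_def algebra_simps)
  also have "\<dots> = 0" using Nr xx ax by (simp add: algebra_simps)
  finally have "poly p x = 0" by simp
  thus ?thesis using lc co by (intro algebraic_int.intros)
qed

lemma inR_OK: "inR x \<Longrightarrow> x \<in> OK D"
  unfolding OK_def using inR_QK inR_algint by auto

end

lemma ratA:
  fixes q :: rat and c :: int
  assumes c: "c > 0" and h: "\<And>k. of_int c * q^k \<in> \<int>"
  shows "q \<in> \<int>"
proof -
  obtain u v where uv: "quotient_of q = (u, v)" by (cases "quotient_of q")
  have v: "v > 0" using uv quotient_of_denom_pos by blast
  have cop: "coprime u v" using uv quotient_of_coprime by blast
  have q: "q = of_int u / of_int v" using uv quotient_of_div by blast
  have dv: "v^k dvd c" for k
  proof -
    obtain z where z: "of_int c * q^k = of_int z" using h[of k] by (auto elim: Ints_cases)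
    hence "of_int c * of_int u ^ k = (of_int z * of_int v ^ k :: rat)" using v
      by (simp add: q power_divide field_simps)
    hence "c * u^k = z * v^k" by (metis of_int_eq_iff of_int_mult of_int_power)
    hence "v^k dvd c * u^k" by (metis dvd_triv_right)
    moreover have "coprime (v^k) (u^k)" using cop by (simp add: coprime_commute)
    ultimately show ?thesis by (simp add: coprime_dvd_mult_left_iff)
  qed
  have "v = 1"
  proof (rule ccontr)
    assume "v \<noteq> 1"
    hence v2: "v \<ge> 2" using v by simp
    have "v ^ (nat c) \<le> c" using dv[of "nat c"] c by (simp add: zdvd_imp_le)
    moreover have "(2::int) ^ (nat c) \<le> v ^ (nat c)" using v2 by (simp add: power_mono)
    moreover have "int (nat c) < 2 ^ (nat c)"
      using less_exp[of "nat c"] by (metis of_nat_less_iff of_nat_numeral of_nat_power)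
    ultimately show False using c by simp
  qed
  thus ?thesis using q by simp
qed

lemma common_den:
  fixes f :: "nat \<Rightarrow> rat"
  shows "\<exists>c::int. c > 0 \<and> (\<forall>i<n. of_int c * f i \<in> \<int>)"
proof (induction n)
  case 0 show ?case by (rule exI[of _ 1]) simp
next
  case (Suc n)
  then obtain c where c: "c > 0" "\<forall>i<n. of_int c * f i \<in> \<int>" by blast
  obtain u v where uv: "quotient_of (f n) = (u, v)" by (cases "quotient_of (f n)")
  have v: "v > 0" using uv quotient_of_denom_pos by blast
  have q: "f n = of_int u / of_int v" using uv quotient_of_div by blast
  show ?case
  proof (rule exI[of _ "c * v"], intro conjI allI impI)
    show "c * v > 0" using c v by simp
  next
    fix i assume "i < Suc n"
    then consider "i < n" | "i = n" by linarith
    thus "of_int (c * v) * f i \<in> \<int>"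
    proof cases
      case 1
      have "of_int (c * v) * f i = (of_int c * f i) * of_int v" by simp
      thus ?thesis using c 1 by (metis Ints_mult Ints_of_int)
    next
      case 2
      have fv: "of_int v * f n = of_int u" using v by (simp add: q)
      have "of_int (c * v) * f i = of_int c * (of_int v * f n)" using 2 by simp
      also have "\<dots> = of_int (c*u)" using fv by simp
      finally show ?thesis by (metis Ints_of_int)
    qed
  qed
qed

lemma algebraic_int_plus1:
  assumes "algebraic_int (x::real)" shows "algebraic_int (x + 1)"
proof -
  obtain P where P: "lead_coeff P = 1" "\<forall>i. coeff P i \<in> \<int>" "poly P x = 0"
    using assms by (auto simp: algebraic_int.simps)
  define Q where "Q = pcompose P [:-1, 1:]"
  have "poly Q (x+1) = 0" by (simp add: Q_def poly_pcompose P)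
  moreover have "lead_coeff Q = 1" using lead_coeff_comp[of "[:-1,1:]" P] P by (simp add: Q_def)
  moreover have "\<forall>i. coeff Q i \<in> \<int>"
  proof
    fix i show "coeff Q i \<in> \<int>" unfolding Q_def
      by (rule coeff_pcompose_semiring_closed[where R = "\<int>"])
         (use P in \<open>auto simp: coeff_pCons split: nat.split\<close>)
  qed
  ultimately show ?thesis by (intro algebraic_int.intros)
qed

context qf begin

lemma sqf_rat:
  fixes q :: rat
  assumes h: "of_int D * q^2 \<in> \<int>"
  shows "q \<in> \<int>"
proof -
  obtain u v where uv: "quotient_of q = (u, v)" by (cases "quotient_of q")
  have v: "v > 0" using uv quotient_of_denom_pos by blast
  have cop: "coprime u v" using uv quotient_of_coprime by blast
  have q: "q = of_int u / of_int v" using uv quotient_of_div by blast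
  obtain z where z: "of_int D * q^2 = of_int z" using h by (auto elim: Ints_cases)
  hence "of_int D * of_int u ^ 2 = (of_int z * of_int v ^ 2 :: rat)" using v
    by (simp add: q power_divide field_simps)
  hence "D * u^2 = z * v^2" by (metis of_int_eq_iff of_int_mult of_int_power)
  hence "v^2 dvd D * u^2" by (metis dvd_triv_right)
  moreover have "coprime (v^2) (u^2)" using cop by (simp add: coprime_commute)
  ultimately have "v^2 dvd D" by (simp add: coprime_dvd_mult_left_iff)
  hence "is_unit v" using sqf by (simp add: squarefree_def)
  hence "v = 1" using v by simp
  thus ?thesis using q by simp
qed

lemma mult_sq_lemma: "t * t = (of_int D :: real) \<Longrightarrow>
  (x + y * t) * (z + w * t) = x * z + of_int D * y * w + (x * w + y * z) * t"
proof -
  assume h: "t * t = (of_int D :: real)"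
  have "(x + y * t) * (z + w * t) = x * z + y * w * (t * t) + (x * w + y * z) * t"
    by (simp add: algebra_simps)
  thus ?thesis using h by simp
qed

fun crd :: "rat \<Rightarrow> rat \<Rightarrow> nat \<Rightarrow> rat \<times> rat" where
  "crd a b 0 = (1, 0)"
| "crd a b (Suc k) = (a * fst (crd a b k) + of_int D * b * snd (crd a b k),
                      a * snd (crd a b k) + b * fst (crd a b k))"

lemma crd_pow:
  "(of_rat a + of_rat b * s) ^ k = of_rat (fst (crd a b k)) + of_rat (snd (crd a b k)) * s"
proof (induction k)
  case 0 then show ?case by simp
next
  case (Suc k)
  define al where "al = fst (crd a b k)"
  define be where "be = snd (crd a b k)"
  have "(of_rat a + of_rat b * s) ^ Suc k = (of_rat a + of_rat b * s) * (of_rat al + of_rat be * s)"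
    using Suc.IH by (simp add: al_def be_def)
  also have "\<dots> = of_rat a * of_rat al + of_int D * of_rat b * of_rat be + (of_rat a * of_rat be + of_rat b * of_rat al) * s"
    using mult_sq_lemma[OF s_sq] by blast
  also have "\<dots> = of_rat (fst (crd a b (Suc k))) + of_rat (snd (crd a b (Suc k))) * s"
    by (simp add: al_def be_def of_rat_add of_rat_mult)
  finally show ?case .
qed

lemma crd_norm:
  "fst (crd a b k)^2 - of_int D * snd (crd a b k)^2 = (a^2 - of_int D * b^2)^k"
proof (induction k)
  case 0 then show ?case by simp
next
  case (Suc k)
  define al where "al = fst (crd a b k)"
  define be where "be = snd (crd a b k)"
  have "fst (crd a b (Suc k))^2 - of_int D * snd (crd a b (Suc k))^2
     = (a^2 - of_int D * b^2) * (al^2 - of_int D * be^2)"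
    by (simp add: al_def be_def) algebra
  thus ?case using Suc.IH by (simp add: al_def be_def)
qed

end

context qf begin

lemma algint_norm:
  fixes a b :: rat
  assumes "algebraic_int (of_rat a + of_rat b * s)"
  shows "a^2 - of_int D * b^2 \<in> \<int>"
proof -
  define x where "x = of_rat a + of_rat b * s"
  obtain P where P: "lead_coeff P = 1" "\<forall>i. coeff P i \<in> \<int>" "poly P x = 0"
    using assms by (auto simp: x_def algebraic_int.simps)
  define n where "n = degree P"
  have n0: "n > 0"
  proof (rule ccontr)
    assume "\<not> n > 0"
    hence "degree P = 0" by (simp add: n_def)
    hence e: "P = [:coeff P 0:]" by (simp add: degree_0_id)
    have "coeff P 0 = 1" using P(1) \<open>degree P = 0\<close> by simp
    hence "P = [:1:]" using e by simp
    thus False using P(3) by simp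
  qed
  have red: "\<exists>r. degree r < n \<and> (\<forall>i. coeff r i \<in> \<int>) \<and> poly r x = x^k" for k
  proof (induction k)
    case 0 show ?case by (rule exI[of _ 1]) (auto simp: n0)
  next
    case (Suc k)
    then obtain r where r: "degree r < n" "\<forall>i. coeff r i \<in> \<int>" "poly r x = x^k" by blast
    obtain m where m: "n = Suc m" using n0 by (cases n) auto
    define r' where "r' = pCons 0 r - smult (coeff r m) P"
    have ev: "poly r' x = x^Suc k" using r P by (simp add: r'_def)
    have co: "\<forall>i. coeff r' i \<in> \<int>" using r P by (auto simp: r'_def coeff_pCons split: nat.split)
    have "degree (pCons 0 r) \<le> n" using r(1) degree_pCons_le[of 0 r] by linarith
    moreover have "degree (smult (coeff r m) P) \<le> n" by (simp add: n_def)
    ultimately have dle: "degree r' \<le> n" unfolding r'_def by (rule degree_diff_le)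
    have "coeff r' n = 0" using P(1) by (simp add: r'_def m n_def[symmetric])
    have "degree r' < n"
    proof (rule ccontr)
      assume "\<not> degree r' < n"
      hence dn: "degree r' = n" using dle by simp
      hence "lead_coeff r' = 0" using \<open>coeff r' n = 0\<close> by simp
      hence "r' = 0" by simp
      with dn n0 show False by simp
    qed
    thus ?case using ev co by blast
  qed
  define al where "al i = fst (crd a b i)" for i
  define be where "be i = snd (crd a b i)" for i
  have xpow: "x^i = of_rat (al i) + of_rat (be i) * s" for i
    unfolding x_def al_def be_def by (rule crd_pow)
  obtain c1 where c1: "c1 > 0" "\<forall>i<n. of_int c1 * al i \<in> \<int>" using common_den by blast
  obtain c2 where c2: "c2 > 0" "\<forall>i<n. of_int c2 * be i \<in> \<int>" using common_den by blast
  define c where "c = c1 * c2"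
  have c: "c > 0" using c1 c2 by (simp add: c_def)
  have cal: "of_int c * al i \<in> \<int>" and cbe: "of_int c * be i \<in> \<int>" if "i < n" for i
  proof -
    have "of_int c * al i = (of_int c1 * al i) * of_int c2" by (simp add: c_def)
    thus "of_int c * al i \<in> \<int>" using c1 that by (metis Ints_mult Ints_of_int)
    have "of_int c * be i = (of_int c2 * be i) * of_int c1" by (simp add: c_def)
    thus "of_int c * be i \<in> \<int>" using c2 that by (metis Ints_mult Ints_of_int)
  qed
  have both: "of_int c * al k \<in> \<int> \<and> of_int c * be k \<in> \<int>" for k
  proof -
    obtain r where r: "degree r < n" "\<forall>i. coeff r i \<in> \<int>" "poly r x = x^k" using red by blast
    have "\<forall>i. \<exists>z. coeff r i = of_int z" using r(2) by (metis Ints_cases)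
    then obtain z where z: "\<And>i. coeff r i = of_int (z i)" by metis
    have "x^k = (\<Sum>i\<le>degree r. coeff r i * x^i)" using r(3) by (simp add: poly_altdef)
    also have "\<dots> = (\<Sum>i<n. coeff r i * x^i)"
      using r(1) by (intro sum.mono_neutral_left) (auto simp: coeff_eq_0)
    also have "\<dots> = (\<Sum>i<n. of_int (z i) * (of_rat (al i) + of_rat (be i) * s))"
      by (simp add: z xpow)
    also have "\<dots> = (\<Sum>i<n. of_rat (of_int (z i) * al i) + of_rat (of_int (z i) * be i) * s)"
      by (intro sum.cong) (simp_all add: of_rat_mult algebra_simps)
    also have "\<dots> = (\<Sum>i<n. of_rat (of_int (z i) * al i)) + (\<Sum>i<n. of_rat (of_int (z i) * be i)) * s"
      by (simp add: sum.distrib sum_distrib_right)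
    also have "\<dots> = of_rat (\<Sum>i<n. of_int (z i) * al i) + of_rat (\<Sum>i<n. of_int (z i) * be i) * s"
      by (simp only: of_rat_sum)
    finally have "of_rat (al k) + of_rat (be k) * s =
        of_rat (\<Sum>i<n. of_int (z i) * al i) + of_rat (\<Sum>i<n. of_int (z i) * be i) * s"
      by (simp add: xpow)
    from rep_unique[OF _ _ _ _ this] have eq: "al k = (\<Sum>i<n. of_int (z i) * al i)"
        "be k = (\<Sum>i<n. of_int (z i) * be i)" by auto
    have "of_int c * al k = (\<Sum>i<n. of_int (z i) * (of_int c * al i))"
      by (simp add: eq sum_distrib_left algebra_simps)
    also have "\<dots> \<in> \<int>" by (rule Ints_sum, rule Ints_mult) (auto simp: cal)
    finally have A: "of_int c * al k \<in> \<int>" .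
    have "of_int c * be k = (\<Sum>i<n. of_int (z i) * (of_int c * be i))"
      by (simp add: eq sum_distrib_left algebra_simps)
    also have "\<dots> \<in> \<int>" by (rule Ints_sum, rule Ints_mult) (auto simp: cbe)
    finally show ?thesis using A by blast
  qed
  show ?thesis
  proof (rule ratA[of "c^2"])
    show "c^2 > 0" using c by simp
  next
    fix k
    have "of_int (c^2) * (a^2 - of_int D * b^2)^k = (of_int c * al k)^2 - of_int D * (of_int c * be k)^2"
      using crd_norm[of a b k] by (simp add: al_def be_def power_mult_distrib algebra_simps)
    also have "\<dots> \<in> \<int>"
    proof -
      have h1: "(of_int c * al k)^2 \<in> \<int>" using both[of k] Ints_power by blast
      have h2: "(of_int c * be k)^2 \<in> \<int>" using both[of k] Ints_power by blast
      have h3: "of_int D * (of_int c * be k)^2 \<in> \<int>" using h2 Ints_mult Ints_of_int by blast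
      show ?thesis using h1 h3 Ints_diff by blast
    qed
    finally show "of_int (c^2) * (a^2 - of_int D * b^2)^k \<in> \<int>" .
  qed
qed

end

context qf begin

lemma OK_inR: assumes "x \<in> OK D" shows "inR x"
proof -
  from assms have xq: "x \<in> QK D" and ai: "algebraic_int x" by (auto simp: OK_def)
  obtain a b :: rat where x: "x = of_rat a + of_rat b * s" using xq by (auto simp: QK_def)
  have N: "a^2 - of_int D * b^2 \<in> \<int>" using algint_norm ai x by simp
  have "algebraic_int (x + 1)" using algebraic_int_plus1 ai by blast
  moreover have "x + 1 = of_rat (a + 1) + of_rat b * s" by (simp add: x of_rat_add)
  ultimately have N1: "(a+1)^2 - of_int D * b^2 \<in> \<int>" using algint_norm by metis
  have "2*a = ((a+1)^2 - of_int D * b^2) - (a^2 - of_int D * b^2) - 1"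
    by (simp add: power2_eq_square algebra_simps)
  also have "\<dots> \<in> \<int>" using N N1 Ints_diff Ints_1 by blast
  finally obtain A where A: "2*a = of_int A" by (auto elim: Ints_cases)
  obtain M where M: "a^2 - of_int D * b^2 = of_int M" using N by (auto elim: Ints_cases)
  have "of_int D * (2*b)^2 = (2*a)^2 - 4*(a^2 - of_int D * b^2)"
    by (simp add: power2_eq_square algebra_simps)
  also have "\<dots> = of_int (A^2 - 4*M)" by (simp add: A M)
  finally have "of_int D * (2*b)^2 \<in> \<int>" by simp
  hence "2*b \<in> \<int>" by (rule sqf_rat)
  then obtain B where B: "2*b = of_int B" by (auto elim: Ints_cases)
  have ar: "of_rat a = (real_of_int A) / 2"
  proof -
    have "of_rat (2*a) = real_of_int A" by (simp add: A)
    thus ?thesis by (simp add: of_rat_mult)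
  qed
  have br: "of_rat b = (real_of_int B) / 2"
  proof -
    have "of_rat (2*b) = real_of_int B" by (simp add: B)
    thus ?thesis by (simp add: of_rat_mult)
  qed
  have xe: "x = elt A B" by (simp add: x elt_form ar br)
  have "rat_of_int (A^2 - D*B^2) = (2*a)^2 - of_int D * (2*b)^2" by (simp add: A B)
  also have "\<dots> = 4 * (a^2 - of_int D * b^2)" by (simp add: power2_eq_square algebra_simps)
  also have "\<dots> = rat_of_int (4*M)" by (simp add: M)
  finally have "A^2 - D*B^2 = 4*M" by (simp only: of_int_eq_iff)
  hence "4 dvd A^2 - D*B^2" by simp
  thus ?thesis using xe inR_elt by simp
qed

lemma OK_eq: "x \<in> OK D \<longleftrightarrow> inR x"
  using OK_inR inR_OK by blast

end

context qf begin

lemma s_ge1: "s \<ge> 1" using D2 by simp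

lemma pell_from_pair:
  fixes p1 q1 p2 q2 k :: int
  assumes k1: "p1^2 - D*q1^2 = k" and k2: "p2^2 - D*q2^2 = k" and k0: "k \<noteq> 0"
    and cp: "k dvd p1 - p2" and cq: "k dvd q1 - q2"
    and q1: "q1 > 0" and q2: "q2 > 0" and ne: "(p1, q1) \<noteq> (p2, q2)"
  shows "\<exists>X Y. X^2 - D*Y^2 = 1 \<and> Y \<noteq> 0"
proof -
  define X0 where "X0 = p1*p2 - D*q1*q2"
  define Y0 where "Y0 = q1*p2 - p1*q2"
  have "X0 - k = p2*(p1-p2) - D*q2*(q1-q2)" using k2 by (simp add: X0_def power2_eq_square algebra_simps)
  hence kx: "k dvd X0 - k" using cp cq by simp
  have "k dvd X0" using dvd_add[OF kx dvd_refl[of k]] by simp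
  then obtain X where X: "X0 = k * X" by blast
  have "Y0 = p2*(q1-q2) - q2*(p1-p2)" by (simp add: Y0_def algebra_simps)
  hence "k dvd Y0" using cp cq by simp
  then obtain Y where Y: "Y0 = k * Y" by blast
  have "X0^2 - D*Y0^2 = (p1^2 - D*q1^2) * (p2^2 - D*q2^2)"
    by (simp add: X0_def Y0_def power2_eq_square algebra_simps)
  hence "X0^2 - D*Y0^2 = k * k" by (simp only: k1 k2)
  hence "(k*X)^2 - D*(k*Y)^2 = k * k" by (simp only: X Y)
  hence "k^2 * (X^2 - D*Y^2) = k^2 * 1" by algebra
  hence XY: "X^2 - D*Y^2 = 1" using k0 by simp
  have "Y \<noteq> 0"
  proof
    assume "Y = 0"
    hence e: "q1*p2 = p1*q2" using Y by (simp add: Y0_def)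
    have "q2^2 * k = q2^2 * (p1^2 - D*q1^2)" using k1 by simp
    also have "\<dots> = (q2*p1)^2 - D*q1^2*q2^2" by (simp add: power_mult_distrib algebra_simps)
    also have "\<dots> = (q1*p2)^2 - D*q1^2*q2^2" using e by (simp add: mult.commute)
    also have "\<dots> = q1^2 * (p2^2 - D*q2^2)" by (simp add: power_mult_distrib algebra_simps)
    also have "\<dots> = q1^2 * k" using k2 by simp
    finally have "q2^2 = q1^2" using k0 by simp
    hence "q1 = q2" using q1 q2 power2_eq_iff[of q2 q1] by auto
    moreover from this e q1 have "p1 = p2" by (simp add: mult.commute)
    ultimately show False using ne by simp
  qed
  thus ?thesis using XY by blast
qed

end

context qf begin

lemma fpos: fixes p q :: int assumes "q > 0" shows "\<bar>of_int q * s - of_int p\<bar> > 0"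
proof -
  have "of_int q * s \<noteq> of_int p"
  proof
    assume "of_int q * s = of_int p"
    hence "s = of_int p / of_int q" using assms by (simp add: field_simps)
    hence "s \<in> \<rat>" by simp
    with s_irr show False by blast
  qed
  thus ?thesis by simp
qed

lemma norm_fact: fixes p q :: int
  shows "real_of_int (p^2 - D*q^2) = (of_int p - of_int q * s) * (of_int p + of_int q * s)"
proof -
  have "(of_int p - of_int q * s) * (of_int p + of_int q * s) = of_int p * of_int p - of_int q * of_int q * (s * s)"
    by (simp add: algebra_simps)
  thus ?thesis by (simp add: s_sq power2_eq_square)
qed

lemma pell: "\<exists>X Y. X^2 - D*Y^2 = 1 \<and> Y \<noteq> 0"
proof -
  define S where "S = {(p::int, q::int). q > 0 \<and> \<bar>of_int q * s - of_int p\<bar> < 1 / of_int q}"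
  define F where "F = (\<lambda>(p::int, q::int). \<bar>of_int q * s - of_int p\<bar>)"
  have inf: "infinite S"
  proof
    assume fin: "finite S"
    define m where "m = Min (insert 1 (F ` S))"
    have Fpos: "F a > 0" if "a \<in> S" for a
    proof -
      obtain p q where a: "a = (p,q)" by (cases a)
      have "q > 0" using that a by (simp add: S_def)
      thus ?thesis using fpos[of q p] a by (simp add: F_def)
    qed
    have m0: "m > 0" unfolding m_def using fin Fpos
      by (subst Min_gr_iff) auto
    have mle: "m \<le> F a" if "a \<in> S" for a unfolding m_def using fin that by (intro Min_le) auto
    define N where "N = nat \<lceil>1/m\<rceil> + 1"
    have Npos: "N > 0" by (simp add: N_def)
    have "real N > 1/m" unfolding N_def by linarith
    hence Nm: "1 / real N < m" using m0 Npos by (simp add: field_simps)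
    obtain h k where hk: "0 < k" "k \<le> int N" "\<bar>of_int k * s - of_int h\<bar> < 1 / real N"
      using Dirichlet_approx[OF Npos, of s] by blast
    have "1 / real N \<le> 1 / of_int k" using hk by (simp add: frac_le)
    hence "(h, k) \<in> S" using hk by (auto simp: S_def)
    hence "m \<le> \<bar>of_int k * s - of_int h\<bar>" using mle by (force simp: F_def)
    with hk(3) Nm show False by simp
  qed
  define K where "K = \<lceil>1 + 2 * s\<rceil>"
  have bound: "\<bar>p^2 - D*q^2\<bar> \<le> K \<and> p^2 - D*q^2 \<noteq> 0" if "(p,q) \<in> S" for p q
  proof
    have q: "q > 0" and e: "\<bar>of_int q * s - of_int p\<bar> < 1 / of_int q" using that by (auto simp: S_def)
    define e where "e = of_int q * s - of_int p"
    have q1: "1 / real_of_int q \<le> 1" using q by simp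
    have "\<bar>of_int p + of_int q * s\<bar> = \<bar>2 * of_int q * s - e\<bar>" by (simp add: e_def)
    also have "\<dots> \<le> 2 * of_int q * s + \<bar>e\<bar>" 
    proof -
      have "0 \<le> 2 * of_int q * s" using q s_pos by simp
      thus ?thesis using abs_triangle_ineq4[of "2 * of_int q * s" e] by simp
    qed
    finally have A: "\<bar>of_int p + of_int q * s\<bar> \<le> 2 * of_int q * s + 1" using e q1 e_def by linarith
    have "\<bar>real_of_int (p^2 - D*q^2)\<bar> = \<bar>(of_int p - of_int q * s) * (of_int p + of_int q * s)\<bar>"
      by (simp only: norm_fact)
    also have "\<dots> = \<bar>e\<bar> * \<bar>of_int p + of_int q * s\<bar>"
      by (metis abs_minus_commute abs_mult e_def)
    also have "\<dots> \<le> (1 / of_int q) * (2 * of_int q * s + 1)"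
      using A e e_def q by (intro mult_mono) auto
    also have "\<dots> = 2 * s + 1 / of_int q" using q by (simp add: field_simps)
    also have "\<dots> \<le> 1 + 2 * s" using q1 by simp
    finally have "\<bar>real_of_int (p^2 - D*q^2)\<bar> \<le> 1 + 2 * s" .
    thus "\<bar>p^2 - D*q^2\<bar> \<le> K" unfolding K_def by linarith
    show "p^2 - D*q^2 \<noteq> 0"
    proof
      assume "p^2 - D*q^2 = 0"
      hence "(of_int p - of_int q * s) * (of_int p + of_int q * s) = 0" by (metis norm_fact of_int_0)
      moreover have "of_int p - of_int q * s \<noteq> 0" using fpos[OF q, of p] by auto
      ultimately have "of_int p + of_int q * s = 0" by simp
      hence "s = - of_int p / of_int q" using q by (simp add: field_simps)
      hence "s \<in> \<rat>" by simp
      with s_irr show False by blast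
    qed
  qed
  define g where "g = (\<lambda>(p::int, q::int). (p^2 - D*q^2, p mod (p^2 - D*q^2), q mod (p^2 - D*q^2)))"
  have "g ` S \<subseteq> {-K..K} \<times> {-K..K} \<times> {-K..K}"
  proof
    fix y assume "y \<in> g ` S"
    then obtain p q where pq: "(p,q) \<in> S" and y: "y = g (p,q)" by auto
    define k where "k = p^2 - D*q^2"
    have b: "\<bar>k\<bar> \<le> K" "k \<noteq> 0" using bound[OF pq] by (auto simp: k_def)
    have "\<bar>p mod k\<bar> < \<bar>k\<bar>" "\<bar>q mod k\<bar> < \<bar>k\<bar>" using b(2) by (auto intro: abs_mod_less)
    hence m: "\<bar>p mod k\<bar> \<le> K" "\<bar>q mod k\<bar> \<le> K" using b by linarith+
    have iv: "x \<in> {-K..K}" if "\<bar>x\<bar> \<le> K" for x using that by (simp add: abs_le_iff)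
    have yk: "y = (k, p mod k, q mod k)" using y by (simp add: g_def k_def)
    show "y \<in> {-K..K} \<times> {-K..K} \<times> {-K..K}" unfolding yk using iv m b(1) by blast
  qed
  hence "finite (g ` S)" by (rule finite_subset) auto
  from pigeonhole_infinite[OF inf this] obtain a0 where a0: "a0 \<in> S" "infinite {a \<in> S. g a = g a0}" by blast
  hence "infinite ({a \<in> S. g a = g a0} - {a0})" by simp
  hence "{a \<in> S. g a = g a0} - {a0} \<noteq> {}" by (metis finite.emptyI)
  then obtain a1 where a1: "a1 \<in> S" "g a1 = g a0" "a1 \<noteq> a0" by auto
  obtain p1 q1 where e1: "a1 = (p1, q1)" by (cases a1)
  obtain p2 q2 where e2: "a0 = (p2, q2)" by (cases a0)
  define k where "k = p2^2 - D*q2^2"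
  have gg: "p1^2 - D*q1^2 = k" "p1 mod k = p2 mod k" "q1 mod k = q2 mod k"
    using a1(2) unfolding e1 e2 g_def k_def by auto
  show ?thesis
  proof (rule pell_from_pair[OF gg(1) k_def[symmetric]])
    show "k \<noteq> 0" using bound[of p2 q2] a0 e2 by (simp add: k_def)
    show "k dvd p1 - p2" using gg(2) by (simp add: mod_eq_dvd_iff)
    show "k dvd q1 - q2" using gg(3) by (simp add: mod_eq_dvd_iff)
    show "q1 > 0" using a1 e1 by (simp add: S_def)
    show "q2 > 0" using a0 e2 by (simp add: S_def)
    show "(p1, q1) \<noteq> (p2, q2)" using a1 e1 e2 by simp
  qed
qed

end

context qf begin

lemma elt_conj_mult: "elt A B * elt A (-B) = of_int (A^2 - D*B^2) / 4"
  using elt_norm[of A B] by (simp add: conj_elt)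

lemma unit_elt:
  assumes "v \<in> unitsOK D"
  shows "\<exists>A B. v = elt A B \<and> (A^2 - D*B^2 = 4 \<or> A^2 - D*B^2 = -4)"
proof -
  have v: "inR v" "v \<noteq> 0" "inR (inverse v)" using assms by (auto simp: unitsOK_def OK_eq)
  obtain A B where AB: "v = elt A B" "4 dvd A^2 - D*B^2" using v(1) inR_def by auto
  obtain A' B' where AB': "inverse v = elt A' B'" "4 dvd A'^2 - D*B'^2" using v(3) inR_def by auto
  have "elt (A*A' + D*B*B') (A*B' + A'*B) = 2 * (v * inverse v)" using elt_mult2 AB AB' by simp
  also have "\<dots> = elt 4 0" using v(2) by (simp add: elt_def)
  finally have e: "A*A' + D*B*B' = 4" "A*B' + A'*B = 0" using elt_unique by blast+
  have "(A^2 - D*B^2) * (A'^2 - D*B'^2) = (A*A' + D*B*B')^2 - D*(A*B' + A'*B)^2"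
    by (simp add: power2_eq_square algebra_simps)
  also have "\<dots> = 16" using e by simp
  finally have p16: "(A^2 - D*B^2) * (A'^2 - D*B'^2) = 16" .
  obtain n where n: "A^2 - D*B^2 = 4*n" using AB(2) by blast
  obtain n' where n': "A'^2 - D*B'^2 = 4*n'" using AB'(2) by blast
  have "16 * (n * n') = 16 * 1" using p16 n n' by (simp add: algebra_simps)
  hence "n * n' = 1" by simp
  hence "n = 1 \<or> n = -1" by (auto simp: zmult_eq_1_iff)
  hence "A^2 - D*B^2 = 4 \<or> A^2 - D*B^2 = -4" using n by auto
  thus ?thesis using AB(1) by blast
qed

lemma unit_exists: "\<exists>u \<in> unitsOK D. u > 1"
proof -
  obtain X Y where XY: "X^2 - D*Y^2 = 1" "Y \<noteq> 0" using pell by blast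
  define X' where "X' = \<bar>X\<bar>"
  define Y' where "Y' = \<bar>Y\<bar>"
  have XY': "X'^2 - D*Y'^2 = 1" using XY by (simp add: X'_def Y'_def)
  have Y1: "Y' \<ge> 1" using XY(2) by (simp add: Y'_def)
  have "X'^2 = 1 + D*Y'^2" using XY' by simp
  moreover have "D*Y'^2 \<ge> 0" using D2 by simp
  ultimately have "X' \<noteq> 0" by auto
  hence X1: "X' \<ge> 1" by (simp add: X'_def)
  define u where "u = elt (2*X') (2*Y')"
  define w where "w = elt (2*X') (-(2*Y'))"
  have "(2*X')^2 - D*(2*Y')^2 = 4 * (X'^2 - D*Y'^2)" by (simp add: power2_eq_square algebra_simps)
  hence e4: "(2*X')^2 - D*(2*Y')^2 = 4" using XY' by simp
  have uw: "u * w = 1" unfolding u_def w_def elt_conj_mult e4 by simp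
  have u_eq: "u = of_int X' + of_int Y' * s" by (simp add: u_def elt_def)
  have "of_int X' + of_int Y' * s \<ge> 1 + 1 * 1" using X1 Y1 s_ge1
    by (intro add_mono mult_mono) auto
  hence u1: "u > 1" using u_eq by simp
  have iu: "inverse u = w" using uw by (simp add: inverse_unique)
  have "4 dvd (2*X')^2 - D*(2*Y')^2" using e4 by simp
  hence iR: "inR u" unfolding u_def by (rule inR_elt)
  have "4 dvd (2*X')^2 - D*(-(2*Y'))^2" using e4 by simp
  hence wR: "inR w" unfolding w_def by (rule inR_elt)
  have "u \<in> OK D" "inverse u \<in> OK D" using iR wR iu OK_eq by auto
  hence "u \<in> unitsOK D" using u1 unfolding unitsOK_def by auto
  thus ?thesis using u1 by blast
qed

lemma finite_units: "finite {v \<in> unitsOK D. 1 < v \<and> v \<le> Bd}"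
proof -
  define K where "K = \<lceil>Bd\<rceil> + 1"
  have "{v \<in> unitsOK D. 1 < v \<and> v \<le> Bd} \<subseteq> (\<lambda>(a,b). elt a b) ` ({-K..K} \<times> {-K..K})"
  proof
    fix v assume v: "v \<in> {v \<in> unitsOK D. 1 < v \<and> v \<le> Bd}"
    then obtain A B where AB: "v = elt A B" "A^2 - D*B^2 = 4 \<or> A^2 - D*B^2 = -4"
      using unit_elt by blast
    define c where "c = elt A (-B)"
    define N where "N = A^2 - D*B^2"
    have vc: "v * c = of_int N / 4" unfolding N_def by (simp only: AB(1) c_def elt_conj_mult)
    have "N = 4 \<or> N = -4" using AB(2) by (simp add: N_def)
    hence "v * c = 1 \<or> v * c = -1" using vc by (elim disjE) simp_all
    hence "\<bar>v * c\<bar> = 1" by auto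
    hence "\<bar>v\<bar> * \<bar>c\<bar> = 1" by (simp add: abs_mult)
    moreover have "\<bar>v\<bar> > 1" using v by simp
    ultimately have "\<bar>c\<bar> = 1 / \<bar>v\<bar>" by (simp add: field_simps)
    hence c1: "\<bar>c\<bar> < 1" using \<open>\<bar>v\<bar> > 1\<close> by simp
    have vA: "v + c = of_int A" by (simp add: AB(1) c_def elt_def field_simps)
    have vB: "v - c = of_int B * s" by (simp add: AB(1) c_def elt_def field_simps)
    have vv: "1 < v" "v \<le> Bd" using v by auto
    have cc: "-1 < c" "c < 1" using c1 by (auto simp: abs_less_iff)
    have "\<bar>of_int A\<bar> \<le> Bd + 1" unfolding abs_le_iff using vA vv cc by linarith
    hence A: "\<bar>A\<bar> \<le> K" unfolding K_def by linarith
    have "\<bar>v - c\<bar> \<le> \<bar>v\<bar> + \<bar>c\<bar>" by (rule abs_triangle_ineq4)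
    moreover have "\<bar>v\<bar> = v" using v by simp
    ultimately have "\<bar>of_int B * s\<bar> \<le> Bd + 1" using vB c1 v by simp
    hence Bs: "\<bar>of_int B\<bar> * s \<le> Bd + 1" using s_pos by (simp add: abs_mult)
    have "\<bar>real_of_int B\<bar> * 1 \<le> \<bar>of_int B\<bar> * s" using s_ge1 by (intro mult_left_mono) auto
    hence "\<bar>real_of_int B\<bar> \<le> Bd + 1" using Bs by simp
    hence B: "\<bar>B\<bar> \<le> K" unfolding K_def by linarith
    have iv: "x \<in> {-K..K}" if "\<bar>x\<bar> \<le> K" for x using that by (simp add: abs_le_iff)
    show "v \<in> (\<lambda>(a,b). elt a b) ` ({-K..K} \<times> {-K..K})"
      by (rule image_eqI[of _ _ "(A,B)"]) (use AB(1) iv A B in auto)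
  qed
  thus ?thesis by (rule finite_subset) auto
qed

lemma fund_unit_prop:
  "fund_unit D \<in> unitsOK D \<and> fund_unit D > 1 \<and> (\<forall>v \<in> unitsOK D. v > 1 \<longrightarrow> fund_unit D \<le> v)"
proof -
  obtain u0 where u0: "u0 \<in> unitsOK D" "u0 > 1" using unit_exists by blast
  define U where "U = {v \<in> unitsOK D. 1 < v \<and> v \<le> u0}"
  have fin: "finite U" unfolding U_def by (rule finite_units)
  have ne: "u0 \<in> U" using u0 by (simp add: U_def)
  define e where "e = Min U"
  have eU: "e \<in> U" unfolding e_def using fin ne by (intro Min_in) auto
  have P: "e \<in> unitsOK D \<and> e > 1 \<and> (\<forall>v \<in> unitsOK D. v > 1 \<longrightarrow> e \<le> v)"
  proof (intro conjI ballI impI)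
    show "e \<in> unitsOK D" "e > 1" using eU by (auto simp: U_def)
  next
    fix v assume v: "v \<in> unitsOK D" "v > 1"
    show "e \<le> v"
    proof (cases "v \<le> u0")
      case True
      hence vU: "v \<in> U" using v by (simp add: U_def)
      show ?thesis unfolding e_def using fin vU by (rule Min_le)
    next
      case False
      moreover have "e \<le> u0" unfolding e_def using fin ne by (rule Min_le)
      ultimately show ?thesis by simp
    qed
  qed
  have "fund_unit D = e" unfolding fund_unit_def
  proof (rule the_equality)
    show "e \<in> unitsOK D \<and> e > 1 \<and> (\<forall>v \<in> unitsOK D. v > 1 \<longrightarrow> e \<le> v)" by (rule P)
  next
    fix u assume "u \<in> unitsOK D \<and> u > 1 \<and> (\<forall>v \<in> unitsOK D. v > 1 \<longrightarrow> u \<le> v)"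
    thus "u = e" using P by force
  qed
  thus ?thesis using P by simp
qed

end

context qf begin

lemma inR_int_dvd:
  fixes M q :: int
  assumes "q \<noteq> 0" "inR (of_int M / of_int q)"
  shows "q dvd M"
proof -
  have "algebraic_int (of_int M / of_int q :: real)" using assms(2) inR_algint by blast
  moreover have "(of_int M / of_int q :: real) \<in> \<rat>" by simp
  ultimately have "(of_int M / of_int q :: real) \<in> \<int>" by (rule rational_algebraic_int_is_int)
  then obtain z where "(of_int M / of_int q :: real) = of_int z" by (auto elim: Ints_cases)
  hence "of_int M = (of_int (z * q) :: real)" using assms(1) by (simp add: field_simps)
  hence "M = z * q" by (simp only: of_int_eq_iff)
  thus ?thesis by simp
qed

lemma inR_div_mult: "inR (x / q) \<Longrightarrow> inR y \<Longrightarrow> inR (y * x / q)"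
  using inR_mult[of y "x / q"] by simp

lemma pow_cong:
  assumes "inR x" "inR ((x - 1) / q)"
  shows "inR ((x^n - 1) / q)"
proof -
  have "(x^n - 1) / q = ((x - 1) / q) * (\<Sum>i<n. x^i)" by (simp add: power_diff_1_eq)
  also have "inR \<dots>" using assms by (intro inR_mult inR_sum inR_power) auto
  finally show ?thesis .
qed

lemma geo_cong:
  fixes P :: nat
  assumes P: "P > 0" and x: "inR x" and h: "inR ((x - 1) / of_nat P)"
  shows "inR ((x^P - 1) / (of_nat P)^2)"
proof -
  define q where "q = (of_nat P :: real)"
  have q0: "q \<noteq> 0" using P by (simp add: q_def)
  define S where "S = (\<Sum>i<P. x^i)"
  have "S = (\<Sum>i<P. (x^i - 1)) + q" by (simp add: S_def q_def sum_subtractf)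
  hence "S / q = (\<Sum>i<P. (x^i - 1) / q) + 1" using q0 by (simp add: sum_divide_distrib add_divide_distrib)
  moreover have "inR (\<Sum>i<P. (x^i - 1) / q)" using pow_cong[OF x] h by (intro inR_sum) (simp add: q_def)
  ultimately have Sq: "inR (S / q)" by (simp add: inR_add)
  have "(x^P - 1) / (of_nat P)^2 = ((x - 1) / q) * (S / q)"
    by (simp add: power_diff_1_eq S_def q_def power2_eq_square)
  also have "inR \<dots>" using h Sq by (intro inR_mult) (simp_all add: q_def)
  finally show ?thesis .
qed

lemma binom_cong:
  fixes P :: nat
  assumes P: "prime P" and a: "inR a" and b: "inR b"
  shows "inR (((a + b)^P - a^P - b^P) / of_nat P)"
proof -
  have P2: "P \<ge> 2" using P prime_ge_2_nat by blast
  have sets: "{..P} = insert 0 (insert P {1..<P})" using P2 by auto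
  define f where "f k = of_nat (P choose k) * a^k * b^(P-k)" for k
  have "(a+b)^P = (\<Sum>k\<le>P. f k)" by (simp add: binomial_ring f_def)
  also have "\<dots> = f 0 + (f P + (\<Sum>k\<in>{1..<P}. f k))" unfolding sets using P2
    by (subst sum.insert) (auto simp: sum.insert)
  finally have e: "(a+b)^P - a^P - b^P = (\<Sum>k\<in>{1..<P}. f k)" by (simp add: f_def)
  have "(\<Sum>k\<in>{1..<P}. f k) / of_nat P = (\<Sum>k\<in>{1..<P}. of_nat ((P choose k) div P) * a^k * b^(P-k))"
    unfolding sum_divide_distrib
  proof (intro sum.cong refl)
    fix k assume k: "k \<in> {1..<P}"
    have "P dvd (P choose k)" using k P by (intro dvd_choose_prime) auto
    hence "(P choose k) = P * ((P choose k) div P)" by simp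
    hence "real (P choose k) = real P * real ((P choose k) div P)" by (metis of_nat_mult)
    thus "f k / of_nat P = of_nat ((P choose k) div P) * a^k * b^(P-k)"
      using P2 by (simp add: f_def)
  qed
  also have "inR \<dots>" using a b by (intro inR_sum inR_mult inR_power) (auto simp: inR_of_int[of "int _", simplified])
  finally show ?thesis using e by simp
qed

end

context qf begin

lemma fermat_int:
  fixes P :: nat and t :: int
  assumes P: "prime P" and odd: "odd P"
  shows "int P dvd t^P - t"
proof -
  have P0: "P > 0" using P prime_gt_0_nat by blast
  have step: "int P dvd (n+1)^P - n^P - 1" for n :: int
  proof -
    have "inR (((of_int n + 1)^P - (of_int n)^P - 1^P) / of_nat P)"
      using binom_cong[OF P, of "of_int n" 1] by simp
    hence "inR (of_int ((n+1)^P - n^P - 1) / of_int (int P))" by simp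
    thus ?thesis using P0 by (intro inR_int_dvd) auto
  qed
  have nat_case: "int P dvd (int n)^P - int n" for n :: nat
  proof (induction n)
    case 0 show ?case using P0 by (simp add: zero_power)
  next
    case (Suc n)
    have "(int (Suc n))^P - int (Suc n) = ((int n + 1)^P - (int n)^P - 1) + ((int n)^P - int n)"
      by (simp add: add.commute)
    thus ?case using step[of "int n"] Suc.IH by (metis dvd_add)
  qed
  show ?thesis
  proof (cases "t \<ge> 0")
    case True
    then obtain n where "t = int n" by (metis nonneg_int_cases)
    thus ?thesis using nat_case by simp
  next
    case False
    then obtain n where n: "t = - int n" by (metis le_cases neg_0_le_iff_le nonneg_int_cases minus_minus)
    have "t^P - t = - ((int n)^P - int n)" using odd n by (simp add: power_minus_odd)
    thus ?thesis using nat_case[of n] by (simp only: dvd_minus_iff)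
  qed
qed

lemma uD_facts:
  "inR (uD D) \<and> inR (inverse (uD D)) \<and> uD D \<noteq> 0 \<and> (\<exists>T. uD D + inverse (uD D) = of_int T)
   \<and> (uD D = fund_unit D \<or> uD D = fund_unit D ^ 2)"
proof -
  define e where "e = fund_unit D"
  have eu: "e \<in> unitsOK D" using fund_unit_prop by (simp add: e_def)
  hence eR: "inR e" "inR (inverse e)" "e \<noteq> 0" by (auto simp: unitsOK_def OK_eq)
  obtain A B where AB: "e = elt A B" "A^2 - D*B^2 = 4 \<or> A^2 - D*B^2 = -4"
    using unit_elt[OF eu] by blast
  define c where "c = elt A (-B)"
  define N where "N = A^2 - D*B^2"
  have ec: "e * c = of_int N / 4" unfolding N_def c_def AB(1) by (rule elt_conj_mult)
  have nK: "normK D e = of_int N / 4" unfolding normK_def AB(1) N_def by (rule elt_norm)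
  have sA: "e + c = of_int A" by (simp add: AB(1) c_def elt_def field_simps)
  show ?thesis
  proof (cases "N = -4")
    case True
    hence u: "uD D = e^2" using nK by (simp add: uD_def e_def)
    have "e * c = -1" using ec True by simp
    hence ic: "inverse e = - c" by (metis inverse_unique minus_equation_iff mult_minus_right)
    have h: "inverse (uD D) = (- c)^2" using ic u by (metis power_inverse)
    hence ie2: "inverse (uD D) = c^2" by (metis power2_minus)
    have "uD D + inverse (uD D) = e^2 + c^2" unfolding ie2 by (simp add: u)
    also have "\<dots> = (e + c)^2 - 2 * (e * c)" by (simp add: power2_eq_square algebra_simps)
    also have "\<dots> = of_int (A^2 + 2)" using sA \<open>e * c = -1\<close> by simp
    finally have "uD D + inverse (uD D) = of_int (A^2 + 2)" .
    hence ex: "\<exists>T. uD D + inverse (uD D) = of_int T" by blast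
    moreover have "inR (uD D)" using u eR inR_power by simp
    moreover have "inR (inverse (uD D))"
    proof -
      have "inR (- c)" using eR(2) ic by simp
      hence "inR ((- c)^2)" by (rule inR_power)
      thus ?thesis using h by simp
    qed
    moreover have "uD D \<noteq> 0" using u eR by simp
    moreover have "uD D = fund_unit D ^ 2" using u by (simp add: e_def)
    ultimately show ?thesis using ex by blast
  next
    case False
    hence N4: "N = 4" using AB(2) by (auto simp: N_def)
    hence "normK D e \<noteq> -1" using nK by simp
    hence u: "uD D = e" by (simp add: uD_def e_def)
    have "e * c = 1" using ec N4 by simp
    hence ic: "inverse e = c" by (rule inverse_unique)
    have "uD D + inverse (uD D) = of_int A" using sA by (simp add: u ic)
    thus ?thesis using u eR by (auto simp: e_def)
  qed
qed

lemma trace_int: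
  fixes u :: real
  assumes u0: "u \<noteq> 0" and T1: "u + inverse u = of_int T"
  shows "\<exists>t::nat \<Rightarrow> int. \<forall>j. u^j + inverse u ^ j = of_int (t j)"
proof -
  have rec: "u^(Suc (Suc j)) + inverse u ^ (Suc (Suc j)) =
      (u + inverse u) * (u^(Suc j) + inverse u ^ (Suc j)) - (u^j + inverse u ^ j)" for j
  proof -
    have uu: "u * inverse u = 1" using u0 by simp
    have "(u + inverse u) * (u^(Suc j) + inverse u ^ (Suc j)) =
        u^(Suc (Suc j)) + inverse u ^ (Suc (Suc j)) + (u * inverse u) * (u^j + inverse u ^ j)"
      by (simp add: algebra_simps)
    thus ?thesis using uu by simp
  qed
  have "(\<exists>k. u^j + inverse u ^ j = of_int k) \<and> (\<exists>k. u^(Suc j) + inverse u ^ (Suc j) = of_int k)" for j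
  proof (induction j)
    case 0 show ?case using T1 by (auto intro: exI[of _ 2])
  next
    case (Suc j)
    then obtain k1 k2 where k: "u^j + inverse u ^ j = of_int k1" "u^(Suc j) + inverse u ^ (Suc j) = of_int k2"
      by blast
    have "u^(Suc (Suc j)) + inverse u ^ (Suc (Suc j)) = of_int (T * k2 - k1)"
      using rec[of j] k T1 by simp
    thus ?case using k by blast
  qed
  hence "\<forall>j. \<exists>k. u^j + inverse u ^ j = of_int k" by blast
  thus ?thesis by metis
qed

end

theorem proposition3p1:
  fixes D p :: int and l :: nat
  assumes "D \<ge> 2" and "squarefree D"
    and "prime p" and "p \<ge> 5" and "\<not> p dvd D"
    and "l \<ge> 1"
    and "\<exists>k::int. dl D l = of_int k \<and> p dvd k"
    and "\<forall>j. 1 \<le> j \<and> j < l \<longrightarrow> \<not> (\<exists>k::int. dl D j = of_int k \<and> p dvd k)"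
    and "\<exists>k::int. dl D l = of_int k \<and> p^2 dvd k"
  shows "ord_mod D p (fund_unit D) = ord_mod D (p^2) (fund_unit D)"
proof -
  interpret qf D using assms(1,2) by unfold_locales
  define P where "P = nat p"
  have pP: "p = int P" using assms(4) by (simp add: P_def)
  have Pprime: "prime P" using assms(3) by (simp add: P_def)
  have P5: "P \<ge> 5" using assms(4) by (simp add: P_def)
  have Podd: "odd P" using Pprime P5 by (intro prime_odd_nat) auto
  have p0: "p \<noteq> 0" using assms(4) by simp
  define e where "e = fund_unit D"
  have eR: "inR e" "e \<noteq> 0" using fund_unit_prop by (auto simp: e_def unitsOK_def OK_eq)
  define u where "u = uD D"
  have uF: "inR u" "inR (inverse u)" "u \<noteq> 0" "\<exists>T. u + inverse u = of_int T" "u = e \<or> u = e^2"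
    using uD_facts by (auto simp: u_def e_def)
  obtain T where T: "u + inverse u = of_int T" using uF(4) by blast
  obtain tt where tt: "\<And>j. u^j + inverse u ^ j = of_int (tt j)" using trace_int[OF uF(3) T] by blast
  have dlj: "dl D j = of_int (tt j + 1)" for j
  proof -
    have "dl D j = u^j + inverse u ^ j + 1" by (simp add: dl_def u_def)
    thus ?thesis by (simp add: tt)
  qed
  have pl: "p dvd tt l + 1"
  proof -
    obtain k where k: "dl D l = of_int k" "p dvd k" using assms(7) by blast
    have "k = tt l + 1" using k(1) dlj[of l] by simp
    thus ?thesis using k(2) by simp
  qed
  obtain K where K: "tt l + 1 = p^2 * K"
  proof -
    obtain k where k: "dl D l = of_int k" "p^2 dvd k" using assms(9) by blast
    have "k = tt l + 1" using k(1) dlj[of l] by simp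
    thus ?thesis using k(2) that by blast
  qed
  have nPl: "\<not> P dvd l"
  proof
    assume "P dvd l"
    then obtain l' where l': "l = P * l'" by blast
    have l'1: "l' \<ge> 1" using assms(6) l' by (cases l') auto
    have l'l: "l' < l" using l' P5 l'1 by simp
    define y where "y = u^l'"
    define z where "z = inverse u ^ l'"
    have yR: "inR y" "inR z" using uF by (auto simp: y_def z_def intro: inR_power)
    have yz: "y + z = of_int (tt l')" using tt by (simp add: y_def z_def)
    have "y^P + z^P = u^(l'*P) + inverse u ^ (l'*P)" by (simp add: y_def z_def power_mult)
    also have "\<dots> = of_int (tt l)" using tt[of l] l' by (simp add: mult.commute)
    finally have ypz: "y^P + z^P = of_int (tt l)" .
    have "(y+z)^P - y^P - z^P = (y+z)^P - (y^P + z^P)" by simp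
    also have "\<dots> = of_int (tt l')^P - of_int (tt l)" by (simp only: yz ypz)
    also have "\<dots> = of_int (tt l' ^ P - tt l)" by simp
    finally have "inR (of_int (tt l' ^ P - tt l) / of_nat P)" using binom_cong[OF Pprime yR] by simp
    hence d1: "p dvd tt l' ^ P - tt l" using inR_int_dvd[OF p0] pP by simp
    have d2: "p dvd tt l' ^ P - tt l'" using fermat_int[OF Pprime Podd] pP by simp
    have "tt l' + 1 = (tt l + 1) + (tt l' ^ P - tt l) - (tt l' ^ P - tt l')" by simp
    also have "p dvd \<dots>" using dvd_diff[OF dvd_add[OF pl d1] d2] .
    finally have "p dvd tt l' + 1" .
    hence "\<exists>k. dl D l' = of_int k \<and> p dvd k" using dlj by blast
    with assms(8) l'1 l'l show False by blast
  qed
  define x where "x = u^l"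
  have xR: "inR x" "x \<noteq> 0" using uF by (auto simp: x_def intro: inR_power)
  have ix: "inverse x = inverse u ^ l" by (simp add: x_def power_inverse)
  have xd: "x + inverse x + 1 = of_int (p^2 * K)"
    using tt[of l] K ix x_def by (metis of_int_add of_int_1)
  have e3: "x^3 - 1 = (x - 1) * x * (x + inverse x + 1)" using xR(2)
    by (simp add: algebra_simps power3_eq_cube power2_eq_square)
  have e4: "x^3 - 1 = ((x - 1) * x * of_int K) * (of_int p)^2" using e3[unfolded xd] by (simp add: mult_ac)
  have "(x^3 - 1) / (of_int p)^2 = (x - 1) * x * of_int K" using p0 by (simp only: e4) simp
  hence x3R: "inR ((x^3 - 1) / (of_int p)^2)" using xR by (simp add: inR_mult inR_diff)
  have e6: "inR ((e^(6*l) - 1) / (of_int p)^2)"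
  proof (cases "u = e")
    case True
    have "e^(6*l) = (x^3)^2" by (simp add: x_def True flip: power_mult)
    thus ?thesis using pow_cong[of "x^3" "(of_int p)^2" 2] x3R xR by (simp add: inR_power)
  next
    case False
    hence "u = e^2" using uF(5) by simp
    hence "e^(6*l) = x^3" by (simp add: x_def flip: power_mult)
    thus ?thesis using x3R by simp
  qed
  define C where "C q n \<longleftrightarrow> congOK D q (e^n) 1" for q n
  have C_iff: "C q n \<longleftrightarrow> inR ((e^n - 1) / of_int q)" for q n by (simp add: C_def congOK_def OK_eq)
  have Cp2: "C p n" if "C (p^2) n" for n
  proof -
    have h1: "inR ((e^n - 1) / of_int (p^2))" using that unfolding C_iff .
    have h2: "inR (of_int p * (e^n - 1) / of_int (p^2))" by (rule inR_div_mult[OF h1]) simp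
    have eq: "of_int p * (e^n - 1) / of_int (p^2) = (e^n - 1) / (of_int p :: real)"
      using p0 by (simp add: power2_eq_square)
    show ?thesis using h2 unfolding eq C_iff .
  qed
  have C6: "C (p^2) (6*l)" using e6 by (simp add: C_iff)
  have ordm: "ord_mod D q e = (LEAST n. n > 0 \<and> C q n)" for q by (simp add: ord_mod_def C_def)
  define m where "m = ord_mod D p e"
  define M where "M = ord_mod D (p^2) e"
  have l6: "6 * l > 0" using assms(6) by simp
  have mprop: "m > 0 \<and> C p m" unfolding m_def ordm
    by (rule LeastI_ex) (use C6 Cp2 l6 in blast)
  have Mprop: "M > 0 \<and> C (p^2) M" unfolding M_def ordm
    by (rule LeastI_ex) (use C6 l6 in blast)
  have mM: "m \<le> M" unfolding m_def ordm using Mprop Cp2 by (intro Least_le) blast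
  have Cpow: "C q (n * k)" if "C q n" for q n k
  proof -
    have "inR (((e^n)^k - 1) / of_int q)"
      using pow_cong[of "e^n" "of_int q" k] that eR by (simp add: C_iff inR_power)
    thus ?thesis by (simp add: C_iff power_mult)
  qed
  have CmP: "C (p^2) (m * P)"
  proof -
    have P0: "P > 0" using P5 by simp
    have h: "inR ((e^m - 1) / of_nat P)" using mprop pP by (simp add: C_iff)
    have "inR (((e^m)^P - 1) / (of_nat P)^2)" using geo_cong[OF P0 _ h] eR by (simp add: inR_power)
    thus ?thesis using pP by (simp add: C_iff power_mult)
  qed
  define g where "g = gcd (m*P) (6*l)"
  have mP0: "m * P \<noteq> 0" using mprop P5 by simp
  obtain a b where ab: "m*P*a = 6*l*b + g" using bezout_nat[OF mP0, of "6*l"] by (auto simp: g_def)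
  have C1: "C (p^2) (m*P*a)" using Cpow[OF CmP] by simp
  have C2: "C (p^2) (6*l*b)" using Cpow[OF C6] by simp
  have Cg: "C (p^2) g"
  proof -
    define q where "q = real_of_int (p^2)"
    have ee: "e^(m*P*a) = e^(6*l*b) * e^g" by (simp add: ab power_add)
    have eg: "e^g - 1 = (e^(m*P*a) - 1) - e^g * (e^(6*l*b) - 1)" unfolding ee by (simp add: algebra_simps)
    have "(e^g - 1) / q = (e^(m*P*a) - 1) / q - e^g * (e^(6*l*b) - 1) / q"
      unfolding eg by (simp add: diff_divide_distrib)
    moreover have "inR ((e^(m*P*a) - 1) / q)" using C1 by (simp add: C_iff q_def)
    moreover have "inR (e^g * (e^(6*l*b) - 1) / q)"
      using C2 eR by (intro inR_div_mult inR_power) (simp_all add: C_iff q_def)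
    ultimately have "inR ((e^g - 1) / q)" by (simp add: inR_diff)
    thus ?thesis by (simp add: C_iff q_def)
  qed
  have g0: "g > 0" using mP0 by (simp add: g_def)
  have n6: "\<not> P dvd 6 * l"
  proof
    assume "P dvd 6 * l"
    hence "P dvd 6 \<or> P dvd l" using Pprime by (simp add: prime_dvd_mult_iff)
    hence "P dvd 6" using nPl by simp
    hence "P \<le> 6" by (simp add: dvd_imp_le)
    hence "P = 5 \<or> P = 6" using P5 by auto
    moreover have "\<not> prime (6::nat)"
    proof
      assume "prime (6::nat)"
      hence "prime ((2::nat) * 3)" by simp
      from prime_product[OF this] show False by simp
    qed
    ultimately show False using \<open>P dvd 6\<close> Pprime by auto
  qed
  have "g dvd 6 * l" by (simp add: g_def)
  hence "\<not> P dvd g" using n6 dvd_trans by blast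
  hence "coprime P g" using Pprime by (simp add: prime_imp_coprime)
  hence cg: "coprime g P" by (simp add: coprime_commute)
  have "g dvd m * P" by (simp add: g_def)
  hence "g dvd m" using cg by (simp add: coprime_dvd_mult_left_iff)
  hence gm: "g \<le> m" using mprop by (simp add: dvd_imp_le)
  have "M \<le> g" unfolding M_def ordm using g0 Cg by (intro Least_le) blast
  hence "m = M" using mM gm by simp
  thus ?thesis by (simp add: m_def M_def e_def)
qed


end
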